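(* Let $X$ be a smooth toric variety with fan $\Sigma$ and set of maximal cones $\Sigma_{max}$. The sequence of $R\llbracket T^* \rrbracket_F$-modules \[ R\llbracket \mathrm{CDiv}_T(X) \rrbracket_F \xrightarrow{\ \psi\ } \prod_{\tau \in \Sigma_{max}} R\llbracket T_{\tau}^* \rrbracket_F \xrightarrow{\ \pi\ } \prod_{\tau \neq \tau'} R\llbracket T_{\tau \cap \tau'}^* \rrbracket_F \] is exact, where $\psi = (\psi_\tau)_{\tau \in \Sigma_{max}}$, and $\pi$ has, for each pair $\tau \neq \tau'$ of maximal cones, component $\mathrm{pr}_{\tau,\tau\cap\tau'} - \mathrm{pr}_{\tau',\tau\cap\tau'}$ (applied to the $\tau$- and $\tau'$-coordinates), with $\mathrm{pr}_{\tau,\mu}: R\llbracket T_\tau^* \rrbracket_F \to R\llbracket T_\mu^* \rrbracket_F$ induced by the natural quotient $T_\tau^* \to T_\mu^*$ for a face $\mu$ of $\tau$.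
   Context: Let $R$ be a commutative ring and $F$ a one-dimensional commutative formal group law over $R$; write $x +_F y = F(x,y)$. For an abelian group $M$, let $R\llbracket x_M\rrbracket$ be the completion of $R[x_\lambda : \lambda \in M]$ at the kernel of the augmentation $x_\lambda \mapsto 0$; the formal group ring $R\llbracket M \rrbracket_F$ is the quotient of $R\llbracket x_M\rrbracket$ by the closure of the ideal generated by $x_0$ and $x_{\lambda+\mu} - (x_\lambda +_F x_\mu)$; the class of $x_\lambda$ is again denoted $x_\lambda$. A group homomorphism $\phi: M \to M'$ induces $R\llbracket M \rrbracket_F \to R\llbracket M' \rrbracket_F$, $x_\lambda \mapsto x_{\phi(\lambda)}$. $T$ is a split torus with character lattice $T^*$, cocharacter lattice $T_*$ and pairing $\langle\ ,\ \rangle$. $X$ is a smooth toric variety with fan $\Sigma$ in $T_*$; $\Sigma(1)$ denotes its rays, $\sigma(1)$ the rays of a cone $\sigma$, $v_\rho$ the primitive generator of $\rho$. For a cone $\sigma$, $T_\sigma^* = T^*/\sigma^\perp$ with $\sigma^\perp = \{\alpha : \langle\alpha,v\rangle=0\ \forall v\in\sigma\}$; it has basis $\{\alpha_{\sigma,\rho}:\rho\in\sigma(1)\}$ dual to $\{v_\rho : \rho\in\sigma(1)\}$. For a face $\mu$ of $\sigma$, the natural quotient $T_\sigma^* \to T_\mu^*$ sends $\alpha_{\sigma,\rho}$ to $\alpha_{\mu,\rho}$ if $\rho\in\mu(1)$ and to $0$ otherwise. $\mathrm{CDiv}_T(X) = \bigoplus_{\rho\in\Sigma(1)} \mathbb{Z}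 D_\rho$ (free on the $T$-invariant prime divisors). $\psi_\sigma: R\llbracket \mathrm{CDiv}_T(X) \rrbracket_F \to R\llbracket T_\sigma^* \rrbracket_F$ is induced by $\sum n_\rho D_\rho \mapsto \sum_{\rho \in \sigma(1)} n_\rho \alpha_{\sigma,\rho}$. All these rings are $R\llbracket T^* \rrbracket_F$-modules via $T^* \to \mathrm{CDiv}_T(X)$, $\alpha\mapsto \sum_\rho \langle \alpha, v_\rho\rangle D_\rho$, and via the quotient maps $T^* \to T_\sigma^*$. *)

theory Defs
  imports "HOL-Analysis.Analysis" "HOL-Library.Poly_Mapping"
begin

text \<open>The completion of R[x_v : v in V] at the augmentation ideal is the inverse
limit of R[x]/I^n, i.e. formal sums of monomials in the variables V such that in each
total degree only finitely many coefficients are nonzero.\<close>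

definition mdeg :: "('v \<Rightarrow>\<^sub>0 nat) \<Rightarrow> nat" where
  "mdeg m = (\<Sum>k\<in>Poly_Mapping.keys m. Poly_Mapping.lookup m k)"

type_synonym ('v, 'r) pser = "('v \<Rightarrow>\<^sub>0 nat) \<Rightarrow> 'r"

definition ps_carrier :: "'v set \<Rightarrow> ('v, 'r::zero) pser set" where
  "ps_carrier V = {f. (\<forall>m. f m \<noteq> 0 \<longrightarrow> Poly_Mapping.keys m \<subseteq> V) \<and>
                      (\<forall>d. finite {m. mdeg m = d \<and> f m \<noteq> 0})}"

definition ps_mult :: "('v, 'r::comm_ring_1) pser \<Rightarrow> ('v, 'r) pser \<Rightarrow> ('v, 'r) pser" where
  "ps_mult f g = (\<lambda>m. \<Sum>p\<in>{p. fst p + snd p = m}. f (fst p) * g (snd p))"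

definition ps_one :: "('v, 'r::comm_ring_1) pser" where
  "ps_one = (\<lambda>m. if m = 0 then 1 else 0)"

primrec ps_pow :: "('v, 'r::comm_ring_1) pser \<Rightarrow> nat \<Rightarrow> ('v, 'r) pser" where
  "ps_pow f 0 = ps_one"
| "ps_pow f (Suc n) = ps_mult f (ps_pow f n)"

definition ps_X :: "'v \<Rightarrow> ('v, 'r::comm_ring_1) pser" where
  "ps_X v = (\<lambda>m. if m = Poly_Mapping.single v 1 then 1 else 0)"

text \<open>A two-variable power series F(x,y) = sum a i j x^i y^j is given by its coefficients
a.  Substitution F(f,g) for f, g without constant term (the sum converges degreewise,
since f^i g^j only has terms of degree at least i + j).\<close>
definition Fsub :: "(nat \<Rightarrow> nat \<Rightarrow> 'r::comm_ring_1) \<Rightarrow> ('v, 'r) pser \<Rightarrow> ('v, 'r) pser \<Rightarrow> ('v, 'r) pser" where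
  "Fsub a f g = (\<lambda>m. \<Sum>p\<in>{p. fst p + snd p \<le> mdeg m}.
                       a (fst p) (snd p) * ps_mult (ps_pow f (fst p)) (ps_pow g (snd p)) m)"

definition formal_group_law :: "(nat \<Rightarrow> nat \<Rightarrow> 'r::comm_ring_1) \<Rightarrow> bool" where
  "formal_group_law a \<longleftrightarrow>
     (\<forall>i. a i 0 = (if i = 1 then 1 else 0)) \<and>
     (\<forall>j. a 0 j = (if j = 1 then 1 else 0)) \<and>
     (\<forall>i j. a i j = a j i) \<and>
     Fsub a (Fsub a (ps_X (0::nat)) (ps_X 1)) (ps_X 2) =
       Fsub a (ps_X 0) (Fsub a (ps_X 1) (ps_X 2))"

text \<open>The abelian group M is given as a subgroup (carrier set) G of an abelian group type.\<close>

definition fgr_gens :: "(nat \<Rightarrow> nat \<Rightarrow> 'r::comm_ring_1) \<Rightarrow> 'm::ab_group_add set \<Rightarrow> ('m, 'r) pser set" where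
  "fgr_gens a G = {ps_X 0} \<union>
     {(\<lambda>m. ps_X (l + u) m - Fsub a (ps_X l) (ps_X u) m) | l u. l \<in> G \<and> u \<in> G}"

inductive_set fgr_ideal :: "(nat \<Rightarrow> nat \<Rightarrow> 'r::comm_ring_1) \<Rightarrow> 'm::ab_group_add set \<Rightarrow> ('m, 'r) pser set"
  for a G where
  zero: "(\<lambda>_. 0) \<in> fgr_ideal a G"
| step: "j \<in> fgr_ideal a G \<Longrightarrow> h \<in> ps_carrier G \<Longrightarrow> g \<in> fgr_gens a G \<Longrightarrow>
         (\<lambda>m. j m + ps_mult h g m) \<in> fgr_ideal a G"

text \<open>Equality in R[[G]]_F: the difference lies in the closure of the ideal for the adic
topology, i.e. for every n it agrees with an element of the ideal in all degrees < n.\<close>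
definition fgr_eq :: "(nat \<Rightarrow> nat \<Rightarrow> 'r::comm_ring_1) \<Rightarrow> 'm::ab_group_add set \<Rightarrow>
                       ('m, 'r) pser \<Rightarrow> ('m, 'r) pser \<Rightarrow> bool" where
  "fgr_eq a G f g \<longleftrightarrow> (\<forall>n. \<exists>j\<in>fgr_ideal a G. \<forall>m. mdeg m < n \<longrightarrow> f m - g m = j m)"

definition mpush :: "('v \<Rightarrow> 'w) \<Rightarrow> ('v \<Rightarrow>\<^sub>0 nat) \<Rightarrow> ('w \<Rightarrow>\<^sub>0 nat)" where
  "mpush \<phi> m = (\<Sum>k\<in>Poly_Mapping.keys m. Poly_Mapping.single (\<phi> k) (Poly_Mapping.lookup m k))"

definition ps_map :: "('v \<Rightarrow> 'w) \<Rightarrow> ('v, 'r::comm_ring_1) pser \<Rightarrow> ('w, 'r) pser" where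
  "ps_map \<phi> f = (\<lambda>m'. \<Sum>m\<in>{m. mpush \<phi> m = m' \<and> f m \<noteq> 0}. f m)"

text \<open>Lattice T_* = Z^d, i.e. int^'d.  A cone of a smooth fan is represented by the set
of primitive generators of its rays.\<close>

definition zbasis :: "(int^'d::finite) set \<Rightarrow> bool" where
  "zbasis B \<longleftrightarrow> finite B \<and>
     (\<forall>x. \<exists>!c. (\<forall>b. b \<notin> B \<longrightarrow> c b = 0) \<and> x = (\<Sum>b\<in>B. c b *s b))"

definition realv :: "int^'d::finite \<Rightarrow> real^'d" where
  "realv v = (\<chi> i. real_of_int (v $ i))"

definition rcone :: "(int^'d::finite) set \<Rightarrow> (real^'d) set" where
  "rcone S = {x. \<exists>c. (\<forall>s\<in>S. c s \<ge> 0) \<and> x = (\<Sum>s\<in>S. c s *\<^sub>R realv s)}"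

definition smooth_fan :: "(int^'d::finite) set set \<Rightarrow> bool" where
  "smooth_fan \<Sigma> \<longleftrightarrow> finite \<Sigma> \<and> {} \<in> \<Sigma> \<and>
     (\<forall>S\<in>\<Sigma>. \<forall>S'. S' \<subseteq> S \<longrightarrow> S' \<in> \<Sigma>) \<and>
     (\<forall>S\<in>\<Sigma>. \<exists>B. S \<subseteq> B \<and> zbasis B) \<and>
     (\<forall>S\<in>\<Sigma>. \<forall>S'\<in>\<Sigma>. rcone S \<inter> rcone S' = rcone (S \<inter> S'))"

definition max_cones :: "'a set set \<Rightarrow> 'a set set" where
  "max_cones \<Sigma> = {\<tau>\<in>\<Sigma>. \<forall>\<tau>'\<in>\<Sigma>. \<tau> \<subseteq> \<tau>' \<longrightarrow> \<tau>' = \<tau>}"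

text \<open>Z^S, free abelian group on S: CDiv_T(X) = Z^(Sigma(1)), and
T_sigma^* identified with Z^(sigma(1)) via the basis alpha_(sigma,rho).\<close>
definition zfree :: "'a set \<Rightarrow> ('a \<Rightarrow>\<^sub>0 int) set" where
  "zfree S = {l. Poly_Mapping.keys l \<subseteq> S}"

text \<open>Restriction Z^A -> Z^S (D_rho |-> alpha_(sigma,rho) or 0; and T_tau^* -> T_mu^*).\<close>
definition zrestr :: "'a set \<Rightarrow> ('a \<Rightarrow>\<^sub>0 int) \<Rightarrow> ('a \<Rightarrow>\<^sub>0 int)" where
  "zrestr S l = Abs_poly_mapping (\<lambda>v. if v \<in> S then Poly_Mapping.lookup l v else 0)"

end

theory Submission
  imports Defs
begin

lemma mdeg_alt: "finite K \<Longrightarrow> Poly_Mapping.keys m \<subseteq> K \<Longrightarrow> mdeg m = (\<Sum>k\<in>K. Poly_Mapping.lookup m k)"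
  unfolding mdeg_def by (rule sum.mono_neutral_left) (auto simp: in_keys_iff)

lemma mdeg_add: "mdeg (p + q) = mdeg p + mdeg q"
proof -
  let ?K = "Poly_Mapping.keys p \<union> Poly_Mapping.keys q"
  have "mdeg (p+q) = (\<Sum>k\<in>?K. Poly_Mapping.lookup (p+q) k)"
    by (rule mdeg_alt) (use keys_add[of p q] in auto)
  also have "\<dots> = mdeg p + mdeg q"
    by (simp add: lookup_add sum.distrib mdeg_alt[of ?K])
  finally show ?thesis .
qed

lemma mdeg_zero[simp]: "mdeg 0 = 0" by (simp add: mdeg_def)
lemma mdeg_single[simp]: "mdeg (Poly_Mapping.single k n) = n" by (simp add: mdeg_def)
lemma mdeg_sum: "mdeg (sum f K) = (\<Sum>k\<in>K. mdeg (f k))"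
  by (induction K rule: infinite_finite_induct) (auto simp: mdeg_add)
lemma mdeg_eq0: "mdeg m = 0 \<Longrightarrow> m = 0"
  unfolding mdeg_def by (rule poly_mapping_eqI) (simp add: in_keys_iff)

lemma finite_decomp: "finite {p :: ('v \<Rightarrow>\<^sub>0 nat) \<times> ('v \<Rightarrow>\<^sub>0 nat). fst p + snd p = m}"
proof -
  define P where "P = {p :: 'v \<Rightarrow>\<^sub>0 nat. Poly_Mapping.keys p \<subseteq> Poly_Mapping.keys m \<and>
                          (\<forall>k. Poly_Mapping.lookup p k \<le> Poly_Mapping.lookup m k)}"
  have "inj_on (\<lambda>p. restrict (Poly_Mapping.lookup p) (Poly_Mapping.keys m)) P"
  proof (rule inj_onI)
    fix p q assume "p \<in> P" "q \<in> P" and e: "restrict (Poly_Mapping.lookup p) (Poly_Mapping.keys m) = restrict (Poly_Mapping.lookup q) (Poly_Mapping.keys m)"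
    show "p = q"
    proof (rule poly_mapping_eqI)
      fix k show "Poly_Mapping.lookup p k = Poly_Mapping.lookup q k"
      proof (cases "k \<in> Poly_Mapping.keys m")
        case True then show ?thesis using fun_cong[OF e, of k] by simp
      next
        case False
        then have "Poly_Mapping.lookup m k = 0" by (simp add: in_keys_iff)
        moreover have "Poly_Mapping.lookup p k \<le> Poly_Mapping.lookup m k" "Poly_Mapping.lookup q k \<le> Poly_Mapping.lookup m k"
          using \<open>p \<in> P\<close> \<open>q \<in> P\<close> unfolding P_def by blast+
        ultimately show ?thesis by simp
      qed
    qed
  qed
  moreover have "(\<lambda>p. restrict (Poly_Mapping.lookup p) (Poly_Mapping.keys m)) ` P \<subseteq> PiE (Poly_Mapping.keys m) (\<lambda>k. {0..Poly_Mapping.lookup m k})"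
    unfolding P_def by auto
  moreover have "finite (PiE (Poly_Mapping.keys m) (\<lambda>k. {0..Poly_Mapping.lookup m k}))"
    by (rule finite_PiE) auto
  ultimately have fP: "finite P"
    using finite_imageD finite_subset by blast
  have "{p. fst p + snd p = m} \<subseteq> P \<times> P"
  proof
    fix x assume "x \<in> {p :: ('v \<Rightarrow>\<^sub>0 nat) \<times> ('v \<Rightarrow>\<^sub>0 nat). fst p + snd p = m}"
    then have e: "fst x + snd x = m" by simp
    have l: "\<And>k. Poly_Mapping.lookup (fst x) k + Poly_Mapping.lookup (snd x) k = Poly_Mapping.lookup m k"
      using e by (metis lookup_add)
    have "fst x \<in> P" unfolding P_def
    proof (intro CollectI conjI allI subsetI)
      fix k assume "k \<in> Poly_Mapping.keys (fst x)" then show "k \<in> Poly_Mapping.keys m" using l[of k] by (simp add: in_keys_iff)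
    next
      fix k show "Poly_Mapping.lookup (fst x) k \<le> Poly_Mapping.lookup m k" using l[of k] by (metis le_add1)
    qed
    moreover have "snd x \<in> P" unfolding P_def
    proof (intro CollectI conjI allI subsetI)
      fix k assume "k \<in> Poly_Mapping.keys (snd x)" then show "k \<in> Poly_Mapping.keys m" using l[of k] by (simp add: in_keys_iff)
    next
      fix k show "Poly_Mapping.lookup (snd x) k \<le> Poly_Mapping.lookup m k" using l[of k] by (metis le_add2)
    qed
    ultimately show "x \<in> P \<times> P" by (simp add: mem_Times_iff)
  qed
  then show ?thesis using fP by (meson finite_SigmaI finite_subset)
qed

lemma mpush_alt: "finite K \<Longrightarrow> Poly_Mapping.keys m \<subseteq> K \<Longrightarrow>
  mpush \<phi> m = (\<Sum>k\<in>K. Poly_Mapping.single (\<phi> k) (Poly_Mapping.lookup m k))"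
  unfolding mpush_def by (rule sum.mono_neutral_left) (auto simp: in_keys_iff)

lemma mpush_add: "mpush \<phi> (p + q) = mpush \<phi> p + mpush \<phi> q"
proof -
  let ?K = "Poly_Mapping.keys p \<union> Poly_Mapping.keys q"
  have "mpush \<phi> (p+q) = (\<Sum>k\<in>?K. Poly_Mapping.single (\<phi> k) (Poly_Mapping.lookup (p+q) k))"
    by (rule mpush_alt) (use keys_add[of p q] in auto)
  also have "\<dots> = mpush \<phi> p + mpush \<phi> q"
    by (simp add: lookup_add single_add sum.distrib mpush_alt[of ?K])
  finally show ?thesis .
qed

lemma mpush_zero[simp]: "mpush \<phi> 0 = 0" by (simp add: mpush_def)

lemma mpush_sum: "mpush \<phi> (sum f K) = (\<Sum>k\<in>K. mpush \<phi> (f k))"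
  by (induction K rule: infinite_finite_induct) (auto simp: mpush_add)

lemma mpush_single[simp]: "mpush \<phi> (Poly_Mapping.single v n) = Poly_Mapping.single (\<phi> v) n"
  by (simp add: mpush_def)

lemma mdeg_mpush[simp]: "mdeg (mpush \<phi> m) = mdeg m"
  by (simp add: mpush_def mdeg_sum mdeg_def[of m])

lemma mpush_comp: "mpush g (mpush f m) = mpush (g \<circ> f) m"
  by (simp add: mpush_def[of f] mpush_sum mpush_def[of "g \<circ> f"])

lemma monom_decomp: "m = (\<Sum>k\<in>Poly_Mapping.keys m. Poly_Mapping.single k (Poly_Mapping.lookup m k))"
proof (rule poly_mapping_eqI)
  fix j
  show "Poly_Mapping.lookup m j = Poly_Mapping.lookup (\<Sum>k\<in>Poly_Mapping.keys m. Poly_Mapping.single k (Poly_Mapping.lookup m k)) j"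
  proof (cases "j \<in> Poly_Mapping.keys m")
    case True
    then show ?thesis
      by (simp add: lookup_sum lookup_single when_def sum.delta)
  next
    case False
    then show ?thesis
      by (simp add: lookup_sum lookup_single when_def in_keys_iff)
  qed
qed

lemma mpush_id: "(\<And>k. k \<in> Poly_Mapping.keys m \<Longrightarrow> \<phi> k = k) \<Longrightarrow> mpush \<phi> m = m"
  unfolding mpush_def by (subst (2) monom_decomp) (rule sum.cong, auto)

lemma keys_mpush: "Poly_Mapping.keys (mpush \<phi> m) \<subseteq> \<phi> ` Poly_Mapping.keys m"
proof -
  have "Poly_Mapping.keys (mpush \<phi> m) \<subseteq> (\<Union>k\<in>Poly_Mapping.keys m. Poly_Mapping.keys (Poly_Mapping.single (\<phi> k) (Poly_Mapping.lookup m k)))"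
    unfolding mpush_def by (rule keys_sum)
  also have "\<dots> \<subseteq> \<phi> ` Poly_Mapping.keys m" by auto
  finally show ?thesis .
qed

definition fin_deg :: "('v, 'r::zero) pser \<Rightarrow> bool" where
  "fin_deg f \<longleftrightarrow> (\<forall>d. finite {m. mdeg m = d \<and> f m \<noteq> 0})"

lemma ps_map_alt:
  fixes f :: "('v, 'r::comm_ring_1) pser"
  assumes "finite S" "{m. mdeg m = mdeg m' \<and> f m \<noteq> 0} \<subseteq> S"
  shows "ps_map \<phi> f m' = (\<Sum>m\<in>{m\<in>S. mpush \<phi> m = m'}. f m)"
  unfolding ps_map_def
proof (rule sum.mono_neutral_left)
  show "finite {m \<in> S. mpush \<phi> m = m'}" using assms(1) by simp
  show "{m. mpush \<phi> m = m' \<and> f m \<noteq> 0} \<subseteq> {m \<in> S. mpush \<phi> m = m'}"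
    using assms(2) by auto
qed auto

lemma ps_map_nonzero:
  assumes "ps_map \<phi> f m' \<noteq> 0" shows "\<exists>m. mpush \<phi> m = m' \<and> f m \<noteq> 0"
proof (rule ccontr)
  assume "\<not> ?thesis"
  then have "{m. mpush \<phi> m = m' \<and> f m \<noteq> 0} = {}" by auto
  then show False using assms unfolding ps_map_def by simp
qed

lemma fin_deg_ps_map:
  fixes f :: "('v, 'r::comm_ring_1) pser"
  assumes "fin_deg f" shows "fin_deg (ps_map \<phi> f)"
  unfolding fin_deg_def
proof
  fix d
  have "{m'. mdeg m' = d \<and> ps_map \<phi> f m' \<noteq> 0} \<subseteq> mpush \<phi> ` {m. mdeg m = d \<and> f m \<noteq> 0}"
  proof
    fix m' assume "m' \<in> {m'. mdeg m' = d \<and> ps_map \<phi> f m' \<noteq> 0}"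
    then have "mdeg m' = d" "ps_map \<phi> f m' \<noteq> 0" by auto
    then obtain m where "mpush \<phi> m = m'" "f m \<noteq> 0" using ps_map_nonzero by blast
    then show "m' \<in> mpush \<phi> ` {m. mdeg m = d \<and> f m \<noteq> 0}" using \<open>mdeg m' = d\<close> by force
  qed
  then show "finite {m'. mdeg m' = d \<and> ps_map \<phi> f m' \<noteq> 0}"
    using assms unfolding fin_deg_def by (meson finite_imageI finite_subset)
qed

lemma ps_map_lin:
  fixes H :: "('v, 'r::comm_ring_1) pser"
  assumes H: "\<And>m. H m = (\<Sum>i\<in>I (mdeg m). c i * h i m)"
    and fI: "\<And>d. finite (I d)" and fh: "\<And>d i. i \<in> I d \<Longrightarrow> fin_deg (h i)"
  shows "ps_map \<phi> H m' = (\<Sum>i\<in>I (mdeg m'). c i * ps_map \<phi> (h i) m')"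
proof -
  define d where "d = mdeg m'"
  define S where "S = (\<Union>i\<in>I d. {m. mdeg m = d \<and> h i m \<noteq> 0})"
  have fS: "finite S" unfolding S_def using fI fh unfolding fin_deg_def by blast
  have supH: "{m. mdeg m = mdeg m' \<and> H m \<noteq> 0} \<subseteq> S"
  proof
    fix m assume "m \<in> {m. mdeg m = mdeg m' \<and> H m \<noteq> 0}"
    then have "mdeg m = d" "H m \<noteq> 0" by (auto simp: d_def)
    then obtain i where "i \<in> I d" "h i m \<noteq> 0" using H[of m]
      by (metis (mono_tags, lifting) mult_zero_right sum.neutral)
    then show "m \<in> S" unfolding S_def using \<open>mdeg m = d\<close> by auto
  qed
  have "ps_map \<phi> H m' = (\<Sum>m\<in>{m\<in>S. mpush \<phi> m = m'}. H m)"
    by (rule ps_map_alt[OF fS supH])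
  also have "\<dots> = (\<Sum>m\<in>{m\<in>S. mpush \<phi> m = m'}. \<Sum>i\<in>I d. c i * h i m)"
    by (rule sum.cong) (auto simp: H S_def)
  also have "\<dots> = (\<Sum>i\<in>I d. c i * (\<Sum>m\<in>{m\<in>S. mpush \<phi> m = m'}. h i m))"
    by (subst sum.swap) (simp add: sum_distrib_left)
  also have "\<dots> = (\<Sum>i\<in>I d. c i * ps_map \<phi> (h i) m')"
  proof (rule sum.cong[OF refl])
    fix i assume "i \<in> I d"
    have "{m. mdeg m = mdeg m' \<and> h i m \<noteq> 0} \<subseteq> S" unfolding S_def using \<open>i \<in> I d\<close> d_def by blast
    then show "c i * (\<Sum>m\<in>{m\<in>S. mpush \<phi> m = m'}. h i m) = c i * ps_map \<phi> (h i) m'"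
      using ps_map_alt[OF fS, where f="h i" and m'=m' and \<phi>=\<phi>] by simp
  qed
  finally show ?thesis by (simp add: d_def)
qed

lemma ps_map_cong_deg:
  fixes f g :: "('v, 'r::comm_ring_1) pser"
  assumes "fin_deg f" "fin_deg g" "\<And>m. mdeg m = mdeg m' \<Longrightarrow> f m = g m"
  shows "ps_map \<phi> f m' = ps_map \<phi> g m'"
proof -
  define S where "S = {m. mdeg m = mdeg m' \<and> f m \<noteq> 0} \<union> {m. mdeg m = mdeg m' \<and> g m \<noteq> 0}"
  have fS: "finite S" using assms unfolding S_def fin_deg_def by blast
  have "ps_map \<phi> f m' = (\<Sum>m\<in>{m\<in>S. mpush \<phi> m = m'}. f m)" by (rule ps_map_alt[OF fS]) (auto simp: S_def)
  also have "\<dots> = (\<Sum>m\<in>{m\<in>S. mpush \<phi> m = m'}. g m)"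
    by (rule sum.cong) (auto simp: S_def assms(3))
  also have "\<dots> = ps_map \<phi> g m'" by (rule ps_map_alt[OF fS, symmetric]) (auto simp: S_def)
  finally show ?thesis .
qed

lemma ps_map_comp:
  fixes f :: "('v, 'r::comm_ring_1) pser" and \<phi> :: "'v \<Rightarrow> 'w" and g :: "'w \<Rightarrow> 'u"
  assumes "fin_deg f"
  shows "ps_map g (ps_map \<phi> f) = ps_map (g \<circ> \<phi>) f"
proof
  fix m'' :: "'u \<Rightarrow>\<^sub>0 nat"
  define D where "D = {m. mdeg m = mdeg m'' \<and> f m \<noteq> 0}"
  have fD: "finite D" using assms unfolding D_def fin_deg_def by blast
  define E where "E = mpush \<phi> ` D"
  have fE: "finite E" using fD by (simp add: E_def)
  have supE: "{m'. mdeg m' = mdeg m'' \<and> ps_map \<phi> f m' \<noteq> 0} \<subseteq> E"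
  proof
    fix m' assume "m' \<in> {m'. mdeg m' = mdeg m'' \<and> ps_map \<phi> f m' \<noteq> 0}"
    then have "mdeg m' = mdeg m''" "ps_map \<phi> f m' \<noteq> 0" by auto
    then obtain m where "mpush \<phi> m = m'" "f m \<noteq> 0" using ps_map_nonzero by blast
    then show "m' \<in> E" using \<open>mdeg m' = mdeg m''\<close> unfolding E_def D_def by force
  qed
  have "ps_map g (ps_map \<phi> f) m'' = (\<Sum>m'\<in>{m'\<in>E. mpush g m' = m''}. ps_map \<phi> f m')"
    by (rule ps_map_alt[OF fE supE])
  also have "\<dots> = (\<Sum>m'\<in>{m'\<in>E. mpush g m' = m''}. \<Sum>m\<in>{m\<in>D. mpush \<phi> m = m'}. f m)"
  proof (rule sum.cong[OF refl])
    fix m' assume "m' \<in> {m'\<in>E. mpush g m' = m''}"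
    then have "mdeg m' = mdeg m''" by auto
    then show "ps_map \<phi> f m' = (\<Sum>m\<in>{m\<in>D. mpush \<phi> m = m'}. f m)"
      by (intro ps_map_alt[OF fD]) (auto simp: D_def)
  qed
  also have "\<dots> = (\<Sum>m\<in>{m\<in>D. mpush g (mpush \<phi> m) = m''}. f m)"
  proof -
    define D' where "D' = {m\<in>D. mpush g (mpush \<phi> m) = m''}"
    define E' where "E' = {m'\<in>E. mpush g m' = m''}"
    have 1: "(\<Sum>m'\<in>E'. \<Sum>m\<in>{m\<in>D. mpush \<phi> m = m'}. f m) = (\<Sum>m'\<in>E'. \<Sum>m\<in>{x\<in>D'. mpush \<phi> x = m'}. f m)"
    proof (rule sum.cong[OF refl])
      fix m' assume "m' \<in> E'"
      then have "{m\<in>D. mpush \<phi> m = m'} = {x\<in>D'. mpush \<phi> x = m'}" unfolding D'_def E'_def by blast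
      then show "(\<Sum>m\<in>{m\<in>D. mpush \<phi> m = m'}. f m) = (\<Sum>m\<in>{x\<in>D'. mpush \<phi> x = m'}. f m)" by simp
    qed
    have fD': "finite D'" using fD unfolding D'_def by simp
    have fE': "finite E'" using fE unfolding E'_def by simp
    have im: "mpush \<phi> ` D' \<subseteq> E'" unfolding D'_def E'_def E_def by blast
    have 2: "(\<Sum>m'\<in>E'. \<Sum>m\<in>{x\<in>D'. mpush \<phi> x = m'}. f m) = (\<Sum>m\<in>D'. f m)"
      by (rule sum.group[OF fD' fE' im])
    show ?thesis using 1 2 unfolding D'_def E'_def by simp
  qed
  also have "\<dots> = ps_map (g \<circ> \<phi>) f m''"
    using ps_map_alt[OF fD, where f=f and m'=m'' and \<phi>="g \<circ> \<phi>"] by (simp add: D_def mpush_comp)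
  finally show "ps_map g (ps_map \<phi> f) m'' = ps_map (g \<circ> \<phi>) f m''" by (simp add: mpush_comp)
qed

lemma ps_map_id:
  fixes f :: "('v, 'r::comm_ring_1) pser"
  assumes "f \<in> ps_carrier V" "\<And>v. v \<in> V \<Longrightarrow> \<phi> v = v"
  shows "ps_map \<phi> f = f"
proof
  fix m'
  have "{m. mpush \<phi> m = m' \<and> f m \<noteq> 0} = (if f m' \<noteq> 0 then {m'} else {})"
  proof -
    have "\<And>m. f m \<noteq> 0 \<Longrightarrow> mpush \<phi> m = m"
      using assms unfolding ps_carrier_def by (intro mpush_id) blast
    note * = this
    show ?thesis
    proof (cases "f m' \<noteq> 0")
      case True
      then show ?thesis using * by force
    next
      case False
      then show ?thesis using * by force
    qed
  qed
  then show "ps_map \<phi> f m' = f m'" unfolding ps_map_def by auto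
qed

definition low :: "('v, 'r::zero) pser \<Rightarrow> nat \<Rightarrow> ('v \<Rightarrow>\<^sub>0 nat) set" where
  "low f d = {p. mdeg p \<le> d \<and> f p \<noteq> 0}"

lemma finite_low: "fin_deg f \<Longrightarrow> finite (low f d)"
proof -
  assume "fin_deg f"
  have "low f d = (\<Union>e\<in>{..d}. {p. mdeg p = e \<and> f p \<noteq> 0})" unfolding low_def by auto
  then show ?thesis using \<open>fin_deg f\<close> unfolding fin_deg_def by simp
qed

lemma ps_mult_alt:
  fixes f g :: "('v, 'r::comm_ring_1) pser"
  assumes "fin_deg f" "fin_deg g" "mdeg m \<le> d"
  shows "ps_mult f g m = (\<Sum>x\<in>{x\<in>low f d \<times> low g d. fst x + snd x = m}. f (fst x) * g (snd x))"
  unfolding ps_mult_def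
proof (rule sum.mono_neutral_right)
  show "finite {p. fst p + snd p = m}" by (rule finite_decomp)
  show "{x \<in> low f d \<times> low g d. fst x + snd x = m} \<subseteq> {p. fst p + snd p = m}" by auto
  show "\<forall>i\<in>{p. fst p + snd p = m} - {x \<in> low f d \<times> low g d. fst x + snd x = m}. f (fst i) * g (snd i) = 0"
  proof
    fix i assume i: "i \<in> {p. fst p + snd p = m} - {x \<in> low f d \<times> low g d. fst x + snd x = m}"
    then have "mdeg (fst i) \<le> d" "mdeg (snd i) \<le> d" using assms(3) mdeg_add[of "fst i" "snd i"] by auto
    then have "f (fst i) = 0 \<or> g (snd i) = 0" using i unfolding low_def by (auto simp: mem_Times_iff)
    then show "f (fst i) * g (snd i) = 0" by auto
  qed
qed

lemma fin_deg_mult: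
  fixes f g :: "('v, 'r::comm_ring_1) pser"
  assumes "fin_deg f" "fin_deg g" shows "fin_deg (ps_mult f g)"
  unfolding fin_deg_def
proof
  fix d
  have "{m. mdeg m = d \<and> ps_mult f g m \<noteq> 0} \<subseteq> (\<lambda>x. fst x + snd x) ` (low f d \<times> low g d)"
  proof
    fix m assume "m \<in> {m. mdeg m = d \<and> ps_mult f g m \<noteq> 0}"
    then have "mdeg m = d" "ps_mult f g m \<noteq> 0" by auto
    then have "(\<Sum>x\<in>{x\<in>low f d \<times> low g d. fst x + snd x = m}. f (fst x) * g (snd x)) \<noteq> 0"
      using ps_mult_alt[OF assms, of m d] by simp
    then obtain x where "x \<in> low f d \<times> low g d" "fst x + snd x = m"
      by (metis (mono_tags, lifting) empty_Collect_eq sum.empty)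
    then show "m \<in> (\<lambda>x. fst x + snd x) ` (low f d \<times> low g d)" by force
  qed
  then show "finite {m. mdeg m = d \<and> ps_mult f g m \<noteq> 0}"
    using finite_low[OF assms(1)] finite_low[OF assms(2)] by (meson finite_SigmaI finite_imageI finite_subset)
qed

lemma ps_map_mult:
  fixes f g :: "('v, 'r::comm_ring_1) pser" and \<phi> :: "'v \<Rightarrow> 'w"
  assumes ff: "fin_deg f" and fg: "fin_deg g"
  shows "ps_map \<phi> (ps_mult f g) = ps_mult (ps_map \<phi> f) (ps_map \<phi> g)"
proof
  fix m' :: "'w \<Rightarrow>\<^sub>0 nat"
  define d where "d = mdeg m'"
  define P where "P = low f d \<times> low g d"
  have fP: "finite P" unfolding P_def using finite_low[OF ff] finite_low[OF fg] by simp
  define S where "S = (\<lambda>x. fst x + snd x) ` P"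
  have fS: "finite S" unfolding S_def using fP by simp
  have supS: "{m. mdeg m = mdeg m' \<and> ps_mult f g m \<noteq> 0} \<subseteq> S"
  proof
    fix m assume "m \<in> {m. mdeg m = mdeg m' \<and> ps_mult f g m \<noteq> 0}"
    then have "mdeg m = d" "ps_mult f g m \<noteq> 0" by (auto simp: d_def)
    then have "(\<Sum>x\<in>{x\<in>P. fst x + snd x = m}. f (fst x) * g (snd x)) \<noteq> 0"
      using ps_mult_alt[OF ff fg, of m d] by (simp add: P_def)
    then obtain x where "x \<in> P" "fst x + snd x = m"
      by (metis (mono_tags, lifting) empty_Collect_eq sum.empty)
    then show "m \<in> S" unfolding S_def by force
  qed
  define P' where "P' = {x\<in>P. mpush \<phi> (fst x + snd x) = m'}"
  have "ps_map \<phi> (ps_mult f g) m' = (\<Sum>m\<in>{m\<in>S. mpush \<phi> m = m'}. ps_mult f g m)"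
    by (rule ps_map_alt[OF fS supS])
  also have "\<dots> = (\<Sum>m\<in>{m\<in>S. mpush \<phi> m = m'}. \<Sum>x\<in>{x\<in>P'. fst x + snd x = m}. f (fst x) * g (snd x))"
  proof (rule sum.cong[OF refl])
    fix m assume m: "m \<in> {m\<in>S. mpush \<phi> m = m'}"
    then have "mdeg m = d" by (auto simp: d_def)
    then have "ps_mult f g m = (\<Sum>x\<in>{x\<in>P. fst x + snd x = m}. f (fst x) * g (snd x))"
      using ps_mult_alt[OF ff fg, of m d] by (simp add: P_def)
    moreover have "{x\<in>P. fst x + snd x = m} = {x\<in>P'. fst x + snd x = m}" using m unfolding P'_def by auto
    ultimately show "ps_mult f g m = (\<Sum>x\<in>{x\<in>P'. fst x + snd x = m}. f (fst x) * g (snd x))" by simp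
  qed
  also have "\<dots> = (\<Sum>x\<in>P'. f (fst x) * g (snd x))"
    by (rule sum.group) (use fP fS in \<open>auto simp: P'_def S_def\<close>)
  also have "\<dots> = (\<Sum>y\<in>{y. fst y + snd y = m'}. \<Sum>x\<in>{x\<in>P'. (mpush \<phi> (fst x), mpush \<phi> (snd x)) = y}. f (fst x) * g (snd x))"
    by (rule sum.group[symmetric]) (use fP finite_decomp in \<open>auto simp: P'_def mpush_add\<close>)
  also have "\<dots> = (\<Sum>y\<in>{y. fst y + snd y = m'}. ps_map \<phi> f (fst y) * ps_map \<phi> g (snd y))"
  proof (rule sum.cong[OF refl])
    fix y :: "('w \<Rightarrow>\<^sub>0 nat) \<times> ('w \<Rightarrow>\<^sub>0 nat)"
    assume y: "y \<in> {y. fst y + snd y = m'}"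
    then have dy: "mdeg (fst y) \<le> d" "mdeg (snd y) \<le> d" using mdeg_add[of "fst y" "snd y"] by (auto simp: d_def)
    have A: "ps_map \<phi> f (fst y) = (\<Sum>p\<in>{p\<in>low f d. mpush \<phi> p = fst y}. f p)"
      by (rule ps_map_alt[OF finite_low[OF ff]]) (use dy in \<open>auto simp: low_def\<close>)
    have B: "ps_map \<phi> g (snd y) = (\<Sum>q\<in>{q\<in>low g d. mpush \<phi> q = snd y}. g q)"
      by (rule ps_map_alt[OF finite_low[OF fg]]) (use dy in \<open>auto simp: low_def\<close>)
    have "{x\<in>P'. (mpush \<phi> (fst x), mpush \<phi> (snd x)) = y} =
          {p\<in>low f d. mpush \<phi> p = fst y} \<times> {q\<in>low g d. mpush \<phi> q = snd y}"
      using y unfolding P'_def P_def by (auto simp: mpush_add)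
    then show "(\<Sum>x\<in>{x\<in>P'. (mpush \<phi> (fst x), mpush \<phi> (snd x)) = y}. f (fst x) * g (snd x)) =
          ps_map \<phi> f (fst y) * ps_map \<phi> g (snd y)"
      by (simp add: A B sum_product sum.cartesian_product case_prod_beta)
  qed
  also have "\<dots> = ps_mult (ps_map \<phi> f) (ps_map \<phi> g) m'" by (simp add: ps_mult_def)
  finally show "ps_map \<phi> (ps_mult f g) m' = ps_mult (ps_map \<phi> f) (ps_map \<phi> g) m'" .
qed

lemma fin_deg_lin:
  fixes H :: "('v, 'r::comm_ring_1) pser"
  assumes H: "\<And>m. H m = (\<Sum>i\<in>I (mdeg m). c i * h i m)"
    and fI: "\<And>d. finite (I d)" and fh: "\<And>d i. i \<in> I d \<Longrightarrow> fin_deg (h i)"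
  shows "fin_deg H"
  unfolding fin_deg_def
proof
  fix d
  have "{m. mdeg m = d \<and> H m \<noteq> 0} \<subseteq> (\<Union>i\<in>I d. {m. mdeg m = d \<and> h i m \<noteq> 0})"
  proof
    fix m assume "m \<in> {m. mdeg m = d \<and> H m \<noteq> 0}"
    then have "mdeg m = d" "H m \<noteq> 0" by auto
    then obtain i where "i \<in> I d" "h i m \<noteq> 0" using H[of m]
      by (metis (mono_tags, lifting) mult_zero_right sum.neutral)
    then show "m \<in> (\<Union>i\<in>I d. {m. mdeg m = d \<and> h i m \<noteq> 0})" using \<open>mdeg m = d\<close> by auto
  qed
  moreover have "finite (\<Union>i\<in>I d. {m. mdeg m = d \<and> h i m \<noteq> 0})"
    using fI fh unfolding fin_deg_def by blast
  ultimately show "finite {m. mdeg m = d \<and> H m \<noteq> 0}" by (rule finite_subset)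
qed

lemma fin_deg_add:
  fixes f g :: "('v, 'r::comm_ring_1) pser"
  assumes "fin_deg f" "fin_deg g" shows "fin_deg (\<lambda>m. f m + g m)"
  by (rule fin_deg_lin[where I="\<lambda>_. {0::nat,1}" and c="\<lambda>_. 1" and h="\<lambda>i. if i = 0 then f else g"])
     (use assms in auto)

lemma fin_deg_diff:
  fixes f g :: "('v, 'r::comm_ring_1) pser"
  assumes "fin_deg f" "fin_deg g" shows "fin_deg (\<lambda>m. f m - g m)"
  by (rule fin_deg_lin[where I="\<lambda>_. {0::nat,1}" and c="\<lambda>i. if i = 0 then 1 else -1" and h="\<lambda>i. if i = 0 then f else g"])
     (use assms in auto)

lemma ps_map_add:
  fixes f g :: "('v, 'r::comm_ring_1) pser"
  assumes "fin_deg f" "fin_deg g" shows "ps_map \<phi> (\<lambda>m. f m + g m) = (\<lambda>m. ps_map \<phi> f m + ps_map \<phi> g m)"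
proof
  fix m'
  show "ps_map \<phi> (\<lambda>m. f m + g m) m' = ps_map \<phi> f m' + ps_map \<phi> g m'"
    using ps_map_lin[where I="\<lambda>_. {0::nat,1}" and c="\<lambda>_. 1" and h="\<lambda>i. if i = 0 then f else g"
      and H="\<lambda>m. f m + g m" and \<phi>=\<phi> and m'=m'] assms by auto
qed

lemma ps_map_diff:
  fixes f g :: "('v, 'r::comm_ring_1) pser"
  assumes "fin_deg f" "fin_deg g" shows "ps_map \<phi> (\<lambda>m. f m - g m) = (\<lambda>m. ps_map \<phi> f m - ps_map \<phi> g m)"
proof
  fix m'
  show "ps_map \<phi> (\<lambda>m. f m - g m) m' = ps_map \<phi> f m' - ps_map \<phi> g m'"
    using ps_map_lin[where I="\<lambda>_. {0::nat,1}" and c="\<lambda>i. if i = 0 then 1 else -1" and h="\<lambda>i. if i = 0 then f else g"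
      and H="\<lambda>m. f m - g m" and \<phi>=\<phi> and m'=m'] assms by auto
qed

lemma ps_map_zero: "ps_map \<phi> (\<lambda>_. 0::'r::comm_ring_1) = (\<lambda>_. 0)"
  unfolding ps_map_def by simp

lemma fin_deg_zero: "fin_deg (\<lambda>_. 0::'r::comm_ring_1)"
  unfolding fin_deg_def by simp

lemma fin_deg_one: "fin_deg (ps_one :: ('v, 'r::comm_ring_1) pser)"
  unfolding fin_deg_def
proof
  fix d show "finite {m :: 'v \<Rightarrow>\<^sub>0 nat. mdeg m = d \<and> ps_one m \<noteq> (0::'r)}"
    by (rule finite_subset[of _ "{0}"]) (auto simp: ps_one_def split: if_splits)
qed

lemma fin_deg_X: "fin_deg (ps_X v :: ('v, 'r::comm_ring_1) pser)"
  unfolding fin_deg_def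
proof
  fix d show "finite {m :: 'v \<Rightarrow>\<^sub>0 nat. mdeg m = d \<and> ps_X v m \<noteq> (0::'r)}"
    by (rule finite_subset[of _ "{Poly_Mapping.single v 1}"]) (auto simp: ps_X_def split: if_splits)
qed

lemma ps_map_one: "ps_map \<phi> (ps_one :: ('v, 'r::comm_ring_1) pser) = ps_one"
proof
  fix m'
  have "ps_map \<phi> (ps_one :: ('v, 'r::comm_ring_1) pser) m' = (\<Sum>m\<in>{m\<in>{0}. mpush \<phi> m = m'}. ps_one m)"
    by (rule ps_map_alt) (auto simp: ps_one_def split: if_splits)
  also have "{m\<in>{0}. mpush \<phi> m = m'} = (if m' = 0 then {0} else {})" by auto
  also have "(\<Sum>m\<in>(if m' = 0 then {0} else {}). ps_one m) = (ps_one m' :: 'r)"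
    by (cases "m' = 0") (auto simp: ps_one_def)
  finally show "ps_map \<phi> (ps_one :: ('v, 'r::comm_ring_1) pser) m' = ps_one m'" .
qed

lemma ps_map_X: "ps_map \<phi> (ps_X v :: ('v, 'r::comm_ring_1) pser) = ps_X (\<phi> v)"
proof
  fix m'
  have "ps_map \<phi> (ps_X v :: ('v, 'r::comm_ring_1) pser) m' = (\<Sum>m\<in>{m\<in>{Poly_Mapping.single v 1}. mpush \<phi> m = m'}. ps_X v m)"
    by (rule ps_map_alt) (auto simp: ps_X_def split: if_splits)
  also have "{m\<in>{Poly_Mapping.single v 1}. mpush \<phi> m = m'} = (if Poly_Mapping.single (\<phi> v) 1 = m' then {Poly_Mapping.single v 1} else {})" by auto
  also have "(\<Sum>m\<in>(if Poly_Mapping.single (\<phi> v) 1 = m' then {Poly_Mapping.single v 1} else {}). ps_X v m) = (ps_X (\<phi> v) m' :: 'r)"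
    by (cases "Poly_Mapping.single (\<phi> v) 1 = m'") (auto simp: ps_X_def)
  finally show "ps_map \<phi> (ps_X v :: ('v, 'r::comm_ring_1) pser) m' = ps_X (\<phi> v) m'" .
qed

lemma fin_deg_pow: "fin_deg f \<Longrightarrow> fin_deg (ps_pow f n)"
  by (induction n) (auto simp: fin_deg_one fin_deg_mult)

lemma ps_map_pow: "fin_deg f \<Longrightarrow> ps_map \<phi> (ps_pow f n) = ps_pow (ps_map \<phi> f) n"
  by (induction n) (auto simp: ps_map_one ps_map_mult fin_deg_pow)

lemma finite_le_pairs: "finite {p :: nat \<times> nat. fst p + snd p \<le> d}"
  by (rule finite_subset[of _ "{..d} \<times> {..d}"]) auto

lemma Fsub_lin: "Fsub a f g m = (\<Sum>p\<in>{p. fst p + snd p \<le> mdeg m}. a (fst p) (snd p) * ps_mult (ps_pow f (fst p)) (ps_pow g (snd p)) m)"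
  by (simp add: Fsub_def)

lemma fin_deg_Fsub:
  fixes f g :: "('v, 'r::comm_ring_1) pser"
  assumes "fin_deg f" "fin_deg g" shows "fin_deg (Fsub a f g)"
  by (rule fin_deg_lin[where H="Fsub a f g" and I="\<lambda>d. {p. fst p + snd p \<le> d}" and c="\<lambda>p. a (fst p) (snd p)" and h="\<lambda>p. ps_mult (ps_pow f (fst p)) (ps_pow g (snd p))", OF Fsub_lin finite_le_pairs]) (use assms in \<open>auto intro: fin_deg_mult fin_deg_pow\<close>)

lemma ps_map_Fsub:
  fixes f g :: "('v, 'r::comm_ring_1) pser"
  assumes "fin_deg f" "fin_deg g" shows "ps_map \<phi> (Fsub a f g) = Fsub a (ps_map \<phi> f) (ps_map \<phi> g)"
proof
  fix m'
  have "ps_map \<phi> (Fsub a f g) m' = (\<Sum>p\<in>{p. fst p + snd p \<le> mdeg m'}. a (fst p) (snd p) *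
           ps_map \<phi> (ps_mult (ps_pow f (fst p)) (ps_pow g (snd p))) m')"
    by (rule ps_map_lin[where H="Fsub a f g" and I="\<lambda>d. {p. fst p + snd p \<le> d}" and c="\<lambda>p. a (fst p) (snd p)" and h="\<lambda>p. ps_mult (ps_pow f (fst p)) (ps_pow g (snd p))", OF Fsub_lin finite_le_pairs]) (use assms in \<open>auto intro: fin_deg_mult fin_deg_pow\<close>)
  also have "\<dots> = Fsub a (ps_map \<phi> f) (ps_map \<phi> g) m'"
    unfolding Fsub_def using assms by (simp add: ps_map_mult fin_deg_pow ps_map_pow)
  finally show "ps_map \<phi> (Fsub a f g) m' = Fsub a (ps_map \<phi> f) (ps_map \<phi> g) m'" .
qed

lemma carrier_fin_deg: "f \<in> ps_carrier V \<Longrightarrow> fin_deg f"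
  unfolding ps_carrier_def fin_deg_def by blast

lemma ps_carrier_mono: "V \<subseteq> W \<Longrightarrow> ps_carrier V \<subseteq> ps_carrier W"
  unfolding ps_carrier_def by blast

lemma ps_carrier_map:
  fixes f :: "('v, 'r::comm_ring_1) pser"
  assumes "fin_deg f" "\<And>v. \<phi> v \<in> W"
  shows "ps_map \<phi> f \<in> ps_carrier W"
  unfolding ps_carrier_def
proof (intro CollectI conjI allI impI)
  fix m' assume "ps_map \<phi> f m' \<noteq> 0"
  then obtain m where "mpush \<phi> m = m'" using ps_map_nonzero by blast
  then show "Poly_Mapping.keys m' \<subseteq> W" using keys_mpush[of \<phi> m] assms(2) by blast
next
  fix d show "finite {m. mdeg m = d \<and> ps_map \<phi> f m \<noteq> 0}"
    using fin_deg_ps_map[OF assms(1)] unfolding fin_deg_def by blast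
qed

lemma ps_carrier_add:
  fixes f g :: "('v, 'r::comm_ring_1) pser"
  assumes "f \<in> ps_carrier V" "g \<in> ps_carrier V" shows "(\<lambda>m. f m + g m) \<in> ps_carrier V"
proof -
  have fd: "fin_deg (\<lambda>m. f m + g m)" using assms by (intro fin_deg_add carrier_fin_deg)
  show ?thesis unfolding ps_carrier_def
  proof (intro CollectI conjI allI impI)
    fix m assume "f m + g m \<noteq> 0"
    then have "f m \<noteq> 0 \<or> g m \<noteq> 0" by auto
    then show "Poly_Mapping.keys m \<subseteq> V" using assms unfolding ps_carrier_def by blast
  next
    fix d show "finite {m. mdeg m = d \<and> f m + g m \<noteq> 0}" using fd unfolding fin_deg_def by blast
  qed
qed

lemma ps_carrier_diff:
  fixes f g :: "('v, 'r::comm_ring_1) pser"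
  assumes "f \<in> ps_carrier V" "g \<in> ps_carrier V" shows "(\<lambda>m. f m - g m) \<in> ps_carrier V"
proof -
  have fd: "fin_deg (\<lambda>m. f m - g m)" using assms by (intro fin_deg_diff carrier_fin_deg)
  show ?thesis unfolding ps_carrier_def
  proof (intro CollectI conjI allI impI)
    fix m assume "f m - g m \<noteq> 0"
    then have "f m \<noteq> 0 \<or> g m \<noteq> 0" by auto
    then show "Poly_Mapping.keys m \<subseteq> V" using assms unfolding ps_carrier_def by blast
  next
    fix d show "finite {m. mdeg m = d \<and> f m - g m \<noteq> 0}" using fd unfolding fin_deg_def by blast
  qed
qed

lemma ps_carrier_uminus:
  fixes f :: "('v, 'r::comm_ring_1) pser"
  assumes "f \<in> ps_carrier V" shows "(\<lambda>m. - f m) \<in> ps_carrier V"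
  using assms unfolding ps_carrier_def by simp

lemma gens_fin_deg:
  fixes a :: "nat \<Rightarrow> nat \<Rightarrow> 'r::comm_ring_1"
  assumes "g \<in> fgr_gens a G" shows "fin_deg g"
  using assms unfolding fgr_gens_def
  by (auto intro!: fin_deg_X fin_deg_diff fin_deg_Fsub)

lemma ideal_fin_deg: "j \<in> fgr_ideal a G \<Longrightarrow> fin_deg j"
proof (induction rule: fgr_ideal.induct)
  case zero then show ?case by (rule fin_deg_zero)
next
  case (step j h g)
  have "fin_deg (ps_mult h g)" using step carrier_fin_deg gens_fin_deg fin_deg_mult by blast
  then show ?case using step(4) fin_deg_add by blast
qed

lemma gens_map:
  fixes a :: "nat \<Rightarrow> nat \<Rightarrow> 'r::comm_ring_1" and \<phi> :: "'m::ab_group_add \<Rightarrow> 'n::ab_group_add"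
  assumes "g \<in> fgr_gens a G" and hom: "\<And>x y. \<phi> (x + y) = \<phi> x + \<phi> y" and im: "\<phi> ` G \<subseteq> G'"
  shows "ps_map \<phi> g \<in> fgr_gens a G'"
proof -
  have z: "\<phi> 0 = 0" using hom[of 0 0] by simp
  from assms(1) consider "g = ps_X 0" | l u where "l \<in> G" "u \<in> G"
      "g = (\<lambda>m. ps_X (l + u) m - Fsub a (ps_X l) (ps_X u) m)"
    unfolding fgr_gens_def by blast
  then show ?thesis
  proof cases
    case 1 then show ?thesis by (simp add: ps_map_X z fgr_gens_def)
  next
    case (2 l u)
    have "ps_map \<phi> g = (\<lambda>m. ps_X (\<phi> l + \<phi> u) m - Fsub a (ps_X (\<phi> l)) (ps_X (\<phi> u)) m)"
      unfolding 2 by (simp add: ps_map_diff fin_deg_X fin_deg_Fsub ps_map_X ps_map_Fsub hom)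
    moreover have "\<phi> l \<in> G'" "\<phi> u \<in> G'" using 2 im by auto
    ultimately show ?thesis unfolding fgr_gens_def by blast
  qed
qed

lemma ideal_map:
  fixes a :: "nat \<Rightarrow> nat \<Rightarrow> 'r::comm_ring_1" and \<phi> :: "'m::ab_group_add \<Rightarrow> 'n::ab_group_add"
  assumes "j \<in> fgr_ideal a G" and hom: "\<And>x y. \<phi> (x + y) = \<phi> x + \<phi> y" and im: "\<And>x. \<phi> x \<in> G'"
  shows "ps_map \<phi> j \<in> fgr_ideal a G'"
  using assms(1)
proof (induction rule: fgr_ideal.induct)
  case zero
  then show ?case by (simp add: ps_map_zero fgr_ideal.zero)
next
  case (step j h g)
  have fj: "fin_deg j" using step(1) by (rule ideal_fin_deg)
  have fh: "fin_deg h" using step(2) by (rule carrier_fin_deg)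
  have fg: "fin_deg g" using step(3) by (rule gens_fin_deg)
  have "ps_map \<phi> (\<lambda>m. j m + ps_mult h g m) = (\<lambda>m. ps_map \<phi> j m + ps_mult (ps_map \<phi> h) (ps_map \<phi> g) m)"
    by (simp add: ps_map_add fj fin_deg_mult fh fg ps_map_mult)
  moreover have "ps_map \<phi> h \<in> ps_carrier G'" using fh im by (rule ps_carrier_map)
  moreover have "ps_map \<phi> g \<in> fgr_gens a G'" using step(3) hom by (rule gens_map) (use im in auto)
  ultimately show ?case using step(4) by (simp add: fgr_ideal.step)
qed

lemma ideal_add:
  assumes "j1 \<in> fgr_ideal a G" "j2 \<in> fgr_ideal a G" shows "(\<lambda>m. j1 m + j2 m) \<in> fgr_ideal a G"
  using assms(2)
proof (induction rule: fgr_ideal.induct)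
  case zero then show ?case using assms(1) by simp
next
  case (step j h g)
  have "(\<lambda>m. j1 m + (j m + ps_mult h g m)) = (\<lambda>m. (j1 m + j m) + ps_mult h g m)" by (simp add: add.assoc)
  then show ?case using fgr_ideal.step[OF step(4) step(2) step(3)] by simp
qed

lemma ps_mult_uminus: "ps_mult (\<lambda>m. - h m) g = (\<lambda>m. - ps_mult h g m)"
  unfolding ps_mult_def by (simp add: sum_negf)

lemma ideal_uminus:
  assumes "j \<in> fgr_ideal a G" shows "(\<lambda>m. - j m) \<in> fgr_ideal a G"
  using assms
proof (induction rule: fgr_ideal.induct)
  case zero then show ?case by (simp add: fgr_ideal.zero)
next
  case (step j h g)
  have "(\<lambda>m. - (j m + ps_mult h g m)) = (\<lambda>m. - j m + ps_mult (\<lambda>m. - h m) g m)" by (simp add: ps_mult_uminus)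
  then show ?case using fgr_ideal.step[OF step(4) ps_carrier_uminus[OF step(2)] step(3)] by simp
qed

lemma gens_mono: "G \<subseteq> G' \<Longrightarrow> fgr_gens a G \<subseteq> fgr_gens a G'"
  unfolding fgr_gens_def by blast

lemma ideal_mono:
  assumes "G \<subseteq> G'" "j \<in> fgr_ideal a G" shows "j \<in> fgr_ideal a G'"
  using assms(2)
proof (induction rule: fgr_ideal.induct)
  case zero then show ?case by (rule fgr_ideal.zero)
next
  case (step j h g)
  then show ?case using ps_carrier_mono[OF assms(1)] gens_mono[OF assms(1)]
    by (blast intro: fgr_ideal.step)
qed

definition incl :: "(nat \<Rightarrow> nat \<Rightarrow> 'r::comm_ring_1) \<Rightarrow> 'm::ab_group_add set \<Rightarrow> ('m, 'r) pser \<Rightarrow> bool" where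
  "incl a G x \<longleftrightarrow> (\<forall>n. \<exists>j\<in>fgr_ideal a G. \<forall>m. mdeg m < n \<longrightarrow> x m = j m)"

lemma fgr_eq_incl: "fgr_eq a G f g \<longleftrightarrow> incl a G (\<lambda>m. f m - g m)"
  unfolding fgr_eq_def incl_def by simp

lemma incl_add:
  assumes "incl a G x" "incl a G y" shows "incl a G (\<lambda>m. x m + y m)"
  unfolding incl_def
proof
  fix n
  obtain j1 where "j1 \<in> fgr_ideal a G" "\<forall>m. mdeg m < n \<longrightarrow> x m = j1 m" using assms(1) unfolding incl_def by blast
  moreover obtain j2 where "j2 \<in> fgr_ideal a G" "\<forall>m. mdeg m < n \<longrightarrow> y m = j2 m" using assms(2) unfolding incl_def by blast
  ultimately show "\<exists>j\<in>fgr_ideal a G. \<forall>m. mdeg m < n \<longrightarrow> x m + y m = j m"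
    by (intro bexI[of _ "\<lambda>m. j1 m + j2 m"] ideal_add) auto
qed

lemma incl_uminus:
  assumes "incl a G x" shows "incl a G (\<lambda>m. - x m)"
  unfolding incl_def
proof
  fix n
  obtain j1 where "j1 \<in> fgr_ideal a G" "\<forall>m. mdeg m < n \<longrightarrow> x m = j1 m" using assms(1) unfolding incl_def by blast
  then show "\<exists>j\<in>fgr_ideal a G. \<forall>m. mdeg m < n \<longrightarrow> - x m = j m"
    by (intro bexI[of _ "\<lambda>m. - j1 m"] ideal_uminus) auto
qed

lemma incl_zero: "incl a G (\<lambda>_. 0)"
  unfolding incl_def using fgr_ideal.zero[of a G] by force

lemma incl_mono: "G \<subseteq> G' \<Longrightarrow> incl a G x \<Longrightarrow> incl a G' x"
  unfolding incl_def using ideal_mono by blast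

lemma incl_cong: "incl a G x \<Longrightarrow> (\<And>m. x m = y m) \<Longrightarrow> incl a G y"
  by (metis ext)

lemma fgr_eq_map:
  fixes a :: "nat \<Rightarrow> nat \<Rightarrow> 'r::comm_ring_1" and \<phi> :: "'m::ab_group_add \<Rightarrow> 'n::ab_group_add"
  assumes "fgr_eq a G f g" "fin_deg f" "fin_deg g"
    and hom: "\<And>x y. \<phi> (x + y) = \<phi> x + \<phi> y" and im: "\<And>x. \<phi> x \<in> G'"
  shows "fgr_eq a G' (ps_map \<phi> f) (ps_map \<phi> g)"
  unfolding fgr_eq_def
proof
  fix n
  obtain j where j: "j \<in> fgr_ideal a G" "\<And>m. mdeg m < n \<Longrightarrow> f m - g m = j m"
    using assms(1) unfolding fgr_eq_def by blast
  have "ps_map \<phi> j \<in> fgr_ideal a G'" using j(1) hom im by (rule ideal_map)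
  moreover have "\<forall>m'. mdeg m' < n \<longrightarrow> ps_map \<phi> f m' - ps_map \<phi> g m' = ps_map \<phi> j m'"
  proof (intro allI impI)
    fix m' :: "'n \<Rightarrow>\<^sub>0 nat" assume "mdeg m' < n"
    have "ps_map \<phi> f m' - ps_map \<phi> g m' = ps_map \<phi> (\<lambda>m. f m - g m) m'"
      using ps_map_diff[OF assms(2,3), of \<phi>] by metis
    also have "\<dots> = ps_map \<phi> j m'"
      by (rule ps_map_cong_deg) (use fin_deg_diff[OF assms(2,3)] ideal_fin_deg[OF j(1)] j(2) \<open>mdeg m' < n\<close> in auto)
    finally show "ps_map \<phi> f m' - ps_map \<phi> g m' = ps_map \<phi> j m'" .
  qed
  ultimately show "\<exists>j\<in>fgr_ideal a G'. \<forall>m. mdeg m < n \<longrightarrow> ps_map \<phi> f m - ps_map \<phi> g m = j m" by blast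
qed

lemma lookup_zrestr: "Poly_Mapping.lookup (zrestr S l) v = (if v \<in> S then Poly_Mapping.lookup l v else 0)"
proof -
  have "finite {v. (if v \<in> S then Poly_Mapping.lookup l v else 0) \<noteq> 0}"
    by (rule finite_subset[OF _ finite_lookup[of l]]) auto
  then show ?thesis unfolding zrestr_def by simp
qed

lemma zrestr_add: "zrestr S (x + y) = zrestr S x + zrestr S y"
  by (rule poly_mapping_eqI) (simp add: lookup_zrestr lookup_add)

lemma zrestr_in: "zrestr S l \<in> zfree S"
  unfolding zfree_def by (auto simp: in_keys_iff lookup_zrestr split: if_splits)

lemma zrestr_comp: "zrestr S \<circ> zrestr T = zrestr (S \<inter> T)"
  by (rule ext, rule poly_mapping_eqI) (simp add: lookup_zrestr)

lemma zrestr_id: "l \<in> zfree S \<Longrightarrow> zrestr S l = l"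
  unfolding zfree_def by (rule poly_mapping_eqI) (auto simp: lookup_zrestr in_keys_iff)

lemma zfree_mono: "S \<subseteq> T \<Longrightarrow> zfree S \<subseteq> zfree T"
  unfolding zfree_def by auto

abbreviation RR :: "'a set \<Rightarrow> ('a \<Rightarrow>\<^sub>0 int, 'r::comm_ring_1) pser \<Rightarrow> ('a \<Rightarrow>\<^sub>0 int, 'r) pser" where
  "RR S f \<equiv> ps_map (zrestr S) f"

lemma RR_RR: "fin_deg f \<Longrightarrow> RR S (RR T f) = RR (S \<inter> T) f"
  by (simp add: ps_map_comp zrestr_comp)

lemma RR_id: "f \<in> ps_carrier (zfree S) \<Longrightarrow> RR S f = f"
  by (rule ps_map_id) (auto simp: zrestr_id)

lemma RR_carrier: "fin_deg f \<Longrightarrow> RR S f \<in> ps_carrier (zfree S)"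
  by (rule ps_carrier_map) (auto simp: zrestr_in)

lemma RR_fgr_eq:
  fixes a :: "nat \<Rightarrow> nat \<Rightarrow> 'r::comm_ring_1"
  assumes "fgr_eq a G f g" "fin_deg f" "fin_deg g"
  shows "fgr_eq a (zfree S) (RR S f) (RR S g)"
  by (rule fgr_eq_map[OF assms]) (auto simp: zrestr_add zrestr_in)

lemma glue:
  fixes a :: "nat \<Rightarrow> nat \<Rightarrow> 'r::comm_ring_1" and A :: "'a set \<Rightarrow> ('a \<Rightarrow>\<^sub>0 int, 'r) pser"
  assumes Acar: "\<forall>\<tau>\<in>C. A \<tau> \<in> ps_carrier (zfree \<tau>)"
    and compat: "\<forall>\<tau>\<in>C. \<forall>\<tau>'\<in>C. \<tau> \<noteq> \<tau>' \<longrightarrow>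
                 fgr_eq a (zfree (\<tau> \<inter> \<tau>')) (RR (\<tau> \<inter> \<tau>') (A \<tau>)) (RR (\<tau> \<inter> \<tau>') (A \<tau>'))"
    and sub: "\<forall>\<tau>\<in>C. \<tau> \<subseteq> U"
  shows "distinct ts \<Longrightarrow> set ts \<subseteq> C \<Longrightarrow>
    \<exists>b\<in>ps_carrier (zfree U). \<forall>\<tau>\<in>set ts. fgr_eq a (zfree \<tau>) (RR \<tau> b) (A \<tau>)"
proof (induction ts)
  case Nil
  have "(\<lambda>_. 0) \<in> ps_carrier (zfree U)" unfolding ps_carrier_def by simp
  then show ?case by auto
next
  case (Cons \<tau> ts)
  then obtain b where b: "b \<in> ps_carrier (zfree U)" "\<forall>\<sigma>\<in>set ts. fgr_eq a (zfree \<sigma>) (RR \<sigma> b) (A \<sigma>)"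
    by auto
  have \<tau>C: "\<tau> \<in> C" using Cons by auto
  have fb: "fin_deg b" using b(1) by (rule carrier_fin_deg)
  have Ac: "A \<tau> \<in> ps_carrier (zfree \<tau>)" using Acar \<tau>C by auto
  have fA: "fin_deg (A \<tau>)" using Ac by (rule carrier_fin_deg)
  have fRb: "fin_deg (RR \<tau> b)" using fb by (rule fin_deg_ps_map)
  define b' where "b' = (\<lambda>m. b m + A \<tau> m - RR \<tau> b m)"
  have AU: "A \<tau> \<in> ps_carrier (zfree U)" using Ac ps_carrier_mono[OF zfree_mono] sub \<tau>C by blast
  have RU: "RR \<tau> b \<in> ps_carrier (zfree U)" using RR_carrier[OF fb] ps_carrier_mono[OF zfree_mono] sub \<tau>C by blast
  have b'c: "b' \<in> ps_carrier (zfree U)" unfolding b'_def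
    by (intro ps_carrier_diff ps_carrier_add b(1) AU RU)
  have fbA: "fin_deg (\<lambda>m. b m + A \<tau> m)" using fb fA by (rule fin_deg_add)
  have RRb': "RR \<sigma> b' = (\<lambda>m. RR \<sigma> b m + RR \<sigma> (A \<tau>) m - RR \<sigma> (RR \<tau> b) m)" for \<sigma>
    unfolding b'_def by (simp add: ps_map_diff[OF fbA fRb] ps_map_add[OF fb fA])
  have "\<forall>\<sigma>\<in>set (\<tau> # ts). fgr_eq a (zfree \<sigma>) (RR \<sigma> b') (A \<sigma>)"
  proof
    fix \<sigma> assume "\<sigma> \<in> set (\<tau> # ts)"
    then consider "\<sigma> = \<tau>" | "\<sigma> \<in> set ts" "\<sigma> \<noteq> \<tau>" using Cons.prems(1) by auto
    then show "fgr_eq a (zfree \<sigma>) (RR \<sigma> b') (A \<sigma>)"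
    proof cases
      case 1
      have "RR \<tau> b' = A \<tau>"
        unfolding RRb' using RR_id[OF Ac] RR_RR[OF fb, of \<tau> \<tau>] by simp
      then show ?thesis using 1 by (simp add: fgr_eq_incl incl_zero)
    next
      case 2
      have \<sigma>C: "\<sigma> \<in> C" using 2 Cons.prems by auto
      have fAs: "fin_deg (A \<sigma>)" using Acar \<sigma>C carrier_fin_deg by blast
      have E1: "fgr_eq a (zfree \<sigma>) (RR \<sigma> b) (A \<sigma>)" using b(2) 2 by auto
      have E2: "fgr_eq a (zfree (\<sigma> \<inter> \<tau>)) (RR (\<sigma> \<inter> \<tau>) b) (RR (\<sigma> \<inter> \<tau>) (A \<sigma>))"
      proof -
        have "fgr_eq a (zfree (\<sigma> \<inter> \<tau>)) (RR (\<sigma> \<inter> \<tau>) (RR \<sigma> b)) (RR (\<sigma> \<inter> \<tau>) (A \<sigma>))"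
          by (rule RR_fgr_eq[OF E1 fin_deg_ps_map[OF fb] fAs])
        moreover have "RR (\<sigma> \<inter> \<tau>) (RR \<sigma> b) = RR (\<sigma> \<inter> \<tau>) b"
          using RR_RR[OF fb, of "\<sigma> \<inter> \<tau>" \<sigma>] by (simp add: Int_assoc Int_commute[of \<tau> \<sigma>])
        ultimately show ?thesis by simp
      qed
      have E3: "fgr_eq a (zfree (\<sigma> \<inter> \<tau>)) (RR (\<sigma> \<inter> \<tau>) (A \<sigma>)) (RR (\<sigma> \<inter> \<tau>) (A \<tau>))"
        using compat \<sigma>C \<tau>C 2 by blast
      have I1: "incl a (zfree \<sigma>) (\<lambda>m. RR \<sigma> b m - A \<sigma> m)" using E1 by (simp add: fgr_eq_incl)
      have I23: "incl a (zfree \<sigma>) (\<lambda>m. (RR (\<sigma> \<inter> \<tau>) b m - RR (\<sigma> \<inter> \<tau>) (A \<sigma>) m) + (RR (\<sigma> \<inter> \<tau>) (A \<sigma>) m - RR (\<sigma> \<inter> \<tau>) (A \<tau>) m))"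
      proof (rule incl_mono[OF zfree_mono[of "\<sigma> \<inter> \<tau>" \<sigma>]])
        show "\<sigma> \<inter> \<tau> \<subseteq> \<sigma>" by auto
        show "incl a (zfree (\<sigma> \<inter> \<tau>)) (\<lambda>m. (RR (\<sigma> \<inter> \<tau>) b m - RR (\<sigma> \<inter> \<tau>) (A \<sigma>) m) + (RR (\<sigma> \<inter> \<tau>) (A \<sigma>) m - RR (\<sigma> \<inter> \<tau>) (A \<tau>) m))"
          by (rule incl_add) (use E2 E3 in \<open>simp_all add: fgr_eq_incl\<close>)
      qed
      have Ifin: "incl a (zfree \<sigma>) (\<lambda>m. (RR \<sigma> b m - A \<sigma> m) + - ((RR (\<sigma> \<inter> \<tau>) b m - RR (\<sigma> \<inter> \<tau>) (A \<sigma>) m) + (RR (\<sigma> \<inter> \<tau>) (A \<sigma>) m - RR (\<sigma> \<inter> \<tau>) (A \<tau>) m)))"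
        by (rule incl_add[OF I1 incl_uminus[OF I23]])
      have e1: "RR \<sigma> (A \<tau>) = RR (\<sigma> \<inter> \<tau>) (A \<tau>)"
        using RR_RR[OF fA, of \<sigma> \<tau>] RR_id[OF Ac] by simp
      have e2: "RR \<sigma> (RR \<tau> b) = RR (\<sigma> \<inter> \<tau>) b" using RR_RR[OF fb] by simp
      show ?thesis unfolding fgr_eq_incl RRb' e1 e2
        by (rule incl_cong[OF Ifin]) (simp add: algebra_simps)
    qed
  qed
  then show ?case using b'c by blast
qed

theorem proposition3p2:
  fixes a :: "nat \<Rightarrow> nat \<Rightarrow> 'r::comm_ring_1"
    and \<Sigma> :: "(int^'d::finite) set set"
  assumes "formal_group_law a"
    and "smooth_fan \<Sigma>"
  shows "(\<forall>b\<in>ps_carrier (zfree (\<Union>\<Sigma>)).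
            \<forall>\<tau>\<in>max_cones \<Sigma>. \<forall>\<tau>'\<in>max_cones \<Sigma>. \<tau> \<noteq> \<tau>' \<longrightarrow>
              fgr_eq a (zfree (\<tau> \<inter> \<tau>'))
                (ps_map (zrestr (\<tau> \<inter> \<tau>')) (ps_map (zrestr \<tau>) b))
                (ps_map (zrestr (\<tau> \<inter> \<tau>')) (ps_map (zrestr \<tau>') b)))
       \<and> (\<forall>A. (\<forall>\<tau>\<in>max_cones \<Sigma>. A \<tau> \<in> ps_carrier (zfree \<tau>)) \<and>
              (\<forall>\<tau>\<in>max_cones \<Sigma>. \<forall>\<tau>'\<in>max_cones \<Sigma>. \<tau> \<noteq> \<tau>' \<longrightarrow>
                 fgr_eq a (zfree (\<tau> \<inter> \<tau>'))
                   (ps_map (zrestr (\<tau> \<inter> \<tau>')) (A \<tau>))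
                   (ps_map (zrestr (\<tau> \<inter> \<tau>')) (A \<tau>')))
            \<longrightarrow> (\<exists>b\<in>ps_carrier (zfree (\<Union>\<Sigma>)).
                   \<forall>\<tau>\<in>max_cones \<Sigma>. fgr_eq a (zfree \<tau>) (ps_map (zrestr \<tau>) b) (A \<tau>)))"
proof -
  have finS: "finite \<Sigma>" using assms(2) unfolding smooth_fan_def by blast
  have MS: "max_cones \<Sigma> \<subseteq> \<Sigma>" unfolding max_cones_def by blast
  have refl_eq: "\<And>G f. fgr_eq a G f f" by (simp add: fgr_eq_incl incl_zero)
  have P1: "\<forall>b\<in>ps_carrier (zfree (\<Union>\<Sigma>)).
            \<forall>\<tau>\<in>max_cones \<Sigma>. \<forall>\<tau>'\<in>max_cones \<Sigma>. \<tau> \<noteq> \<tau>' \<longrightarrow>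
              fgr_eq a (zfree (\<tau> \<inter> \<tau>'))
                (ps_map (zrestr (\<tau> \<inter> \<tau>')) (ps_map (zrestr \<tau>) b))
                (ps_map (zrestr (\<tau> \<inter> \<tau>')) (ps_map (zrestr \<tau>') b))"
  proof (intro ballI impI)
    fix b :: "((int^'d) \<Rightarrow>\<^sub>0 int, 'r) pser" and \<tau> \<tau>' :: "(int^'d) set"
    assume b: "b \<in> ps_carrier (zfree (\<Union>\<Sigma>))"
    then have fb: "fin_deg b" by (rule carrier_fin_deg)
    have "RR (\<tau> \<inter> \<tau>') (RR \<tau> b) = RR (\<tau> \<inter> \<tau>') b" using RR_RR[OF fb, of "\<tau> \<inter> \<tau>'" \<tau>]
      by (simp add: Int_assoc Int_commute Int_left_commute)
    moreover have "RR (\<tau> \<inter> \<tau>') (RR \<tau>' b) = RR (\<tau> \<inter> \<tau>') b" using RR_RR[OF fb, of "\<tau> \<inter> \<tau>'" \<tau>']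
      by (simp add: Int_assoc)
    ultimately show "fgr_eq a (zfree (\<tau> \<inter> \<tau>'))
                (ps_map (zrestr (\<tau> \<inter> \<tau>')) (ps_map (zrestr \<tau>) b))
                (ps_map (zrestr (\<tau> \<inter> \<tau>')) (ps_map (zrestr \<tau>') b))" using refl_eq by simp
  qed
  have P2: "\<forall>A. (\<forall>\<tau>\<in>max_cones \<Sigma>. A \<tau> \<in> ps_carrier (zfree \<tau>)) \<and>
              (\<forall>\<tau>\<in>max_cones \<Sigma>. \<forall>\<tau>'\<in>max_cones \<Sigma>. \<tau> \<noteq> \<tau>' \<longrightarrow>
                 fgr_eq a (zfree (\<tau> \<inter> \<tau>'))
                   (ps_map (zrestr (\<tau> \<inter> \<tau>')) (A \<tau>))
                   (ps_map (zrestr (\<tau> \<inter> \<tau>')) (A \<tau>')))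
            \<longrightarrow> (\<exists>b\<in>ps_carrier (zfree (\<Union>\<Sigma>)).
                   \<forall>\<tau>\<in>max_cones \<Sigma>. fgr_eq a (zfree \<tau>) (ps_map (zrestr \<tau>) b) (A \<tau>))"
  proof (intro allI impI)
    fix A :: "(int^'d) set \<Rightarrow> ((int^'d) \<Rightarrow>\<^sub>0 int, 'r) pser"
    assume H: "(\<forall>\<tau>\<in>max_cones \<Sigma>. A \<tau> \<in> ps_carrier (zfree \<tau>)) \<and>
              (\<forall>\<tau>\<in>max_cones \<Sigma>. \<forall>\<tau>'\<in>max_cones \<Sigma>. \<tau> \<noteq> \<tau>' \<longrightarrow>
                 fgr_eq a (zfree (\<tau> \<inter> \<tau>'))
                   (ps_map (zrestr (\<tau> \<inter> \<tau>')) (A \<tau>))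
                   (ps_map (zrestr (\<tau> \<inter> \<tau>')) (A \<tau>')))"
    have "finite (max_cones \<Sigma>)" using finS MS by (rule rev_finite_subset)
    then obtain ts where ts: "set ts = max_cones \<Sigma>" "distinct ts" using finite_distinct_list by blast
    have sub: "\<forall>\<tau>\<in>max_cones \<Sigma>. \<tau> \<subseteq> \<Union>\<Sigma>" using MS by blast
    show "\<exists>b\<in>ps_carrier (zfree (\<Union>\<Sigma>)).
                   \<forall>\<tau>\<in>max_cones \<Sigma>. fgr_eq a (zfree \<tau>) (ps_map (zrestr \<tau>) b) (A \<tau>)"
      using glue[of "max_cones \<Sigma>" A a "\<Union>\<Sigma>" ts] H sub ts by simp
  qed
  show ?thesis using P1 P2 by blast
qed

end
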